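(* Let $H$ be a strictly $2$-balanced graph with $h$ vertices and $k$ edges. For $n\ge h$ let $G^H$ be the $k$-uniform hypergraph whose vertex set is the edge set of $K_n$ and whose hyperedges are the $k$-sets of edges of $K_n$ forming a copy of $H$. Let $\Delta=\frac{2k\,(n-2)_{h-2}}{|\mathrm{Aut}(H)|}$. Then (1) $G^H$ is $\Delta$-regular; (2) for each $\ell\in\{2,\dots,k-1\}$, $\Delta_\ell(G^H)=o\left(\Delta^{\frac{k-\ell}{k-1}}\right)$ as $n\to\infty$; (3) $\Gamma(G^H)=o(\Delta)$.
   Context: $m_2(H)=\max_{F\subseteq H,|V(F)|\ge3}\frac{|E(F)|-1}{|V(F)|-2}$; $H$ (with $|E(H)|\ge3$) is strictly $2$-balanced if the maximum is attained uniquely at $F=H$. $(n)_j=n(n-1)\cdots(n-j+1)$. For a hypergraph $G$, $\Delta_\ell(G)=\max_{|S|=\ell}|\{e\in E(G):S\subseteq e\}|$, and $\Gamma(G)$ is the maximum over distinct vertices $v,v'$ of the number of $(k-1)$-sets $S$ of vertices with $S\cup\{v\}$ and $S\cup\{v'\}$ both hyperedges. *)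

theory Defs
  imports "HOL-Library.Landau_Symbols" "HOL-Combinatorics.Permutations"
begin

definition simple_graph :: "'a set \<Rightarrow> 'a set set \<Rightarrow> bool" where
  "simple_graph V E \<longleftrightarrow> finite V \<and> (\<forall>e\<in>E. e \<subseteq> V \<and> card e = 2)"

definition subgraph :: "'a set \<Rightarrow> 'a set set \<Rightarrow> 'a set \<Rightarrow> 'a set set \<Rightarrow> bool" where
  "subgraph VF EF V E \<longleftrightarrow> VF \<subseteq> V \<and> EF \<subseteq> E \<and> (\<forall>e\<in>EF. e \<subseteq> VF)"

definition d2 :: "'a set \<Rightarrow> 'a set set \<Rightarrow> real" where
  "d2 V E = (real (card E) - 1) / (real (card V) - 2)"

definition m2 :: "'a set \<Rightarrow> 'a set set \<Rightarrow> real" where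
  "m2 V E = Max {d2 VF EF | VF EF. subgraph VF EF V E \<and> card VF \<ge> 3}"

definition strictly_2_balanced :: "'a set \<Rightarrow> 'a set set \<Rightarrow> bool" where
  "strictly_2_balanced V E \<longleftrightarrow> card E \<ge> 3 \<and> card V \<ge> 3 \<and> d2 V E = m2 V E \<and>
     (\<forall>VF EF. subgraph VF EF V E \<and> card VF \<ge> 3 \<and> d2 VF EF = m2 V E \<longrightarrow> VF = V \<and> EF = E)"

definition Aut :: "'a set \<Rightarrow> 'a set set \<Rightarrow> ('a \<Rightarrow> 'a) set" where
  "Aut V E = {\<sigma>. \<sigma> permutes V \<and> (\<lambda>e. \<sigma> ` e) ` E = E}"

definition falling :: "nat \<Rightarrow> nat \<Rightarrow> nat" where
  "falling n j = (\<Prod>i<j. (n - i))"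

definition Kedges :: "nat \<Rightarrow> nat set set" where
  "Kedges n = {e. e \<subseteq> {..<n} \<and> card e = 2}"

definition copies :: "'a set \<Rightarrow> 'a set set \<Rightarrow> nat \<Rightarrow> nat set set set" where
  "copies V E n = {(\<lambda>e. f ` e) ` E | f. inj_on f V \<and> f ` V \<subseteq> {..<n}}"

definition degree :: "'v set set \<Rightarrow> 'v \<Rightarrow> nat" where
  "degree Es v = card {e\<in>Es. v \<in> e}"

definition max_codegree :: "'v set \<Rightarrow> 'v set set \<Rightarrow> nat \<Rightarrow> nat" where
  "max_codegree Vt Es l = Max {card {e\<in>Es. S \<subseteq> e} | S. S \<subseteq> Vt \<and> card S = l}"

definition Gamma :: "'v set \<Rightarrow> 'v set set \<Rightarrow> nat \<Rightarrow> nat" where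
  "Gamma Vt Es k = Max {card {S. S \<subseteq> Vt \<and> card S = k - 1 \<and> insert v S \<in> Es \<and> insert v' S \<in> Es}
                        | v v'. v \<in> Vt \<and> v' \<in> Vt \<and> v \<noteq> v'}"

end

theory Submission
  imports Defs "HOL-Library.FuncSet"
begin

lemma finite_E: "simple_graph V E \<Longrightarrow> finite E"
  unfolding simple_graph_def by (meson PowI finite_Pow_iff finite_subset subsetI)

lemma d2_le_m2:
  assumes "simple_graph V E" "subgraph VF EF V E" "card VF \<ge> 3"
  shows "d2 VF EF \<le> m2 V E"
proof -
  have fV: "finite V" using assms(1) simple_graph_def by blast
  have fE: "finite E" using finite_E assms(1) .
  have "{d2 VF EF | VF EF. subgraph VF EF V E \<and> card VF \<ge> 3} \<subseteq> (\<lambda>(A,B). d2 A B) ` (Pow V \<times> Pow E)"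
    unfolding subgraph_def by auto
  hence fin: "finite {d2 VF EF | VF EF. subgraph VF EF V E \<and> card VF \<ge> 3}"
    by (rule finite_subset) (use fV fE in auto)
  show ?thesis unfolding m2_def
    by (rule Max_ge[OF fin]) (use assms in blast)
qed

lemma proper_lt:
  assumes "simple_graph V E" "strictly_2_balanced V E" "subgraph VF EF V E" "card VF \<ge> 3"
    "\<not> (VF = V \<and> EF = E)"
  shows "d2 VF EF < d2 V E"
proof -
  have "d2 VF EF \<le> m2 V E" using d2_le_m2 assms by blast
  moreover have "d2 VF EF \<noteq> m2 V E" using assms(2,3,4,5) unfolding strictly_2_balanced_def by blast
  moreover have "d2 V E = m2 V E" using assms(2) unfolding strictly_2_balanced_def by blast
  ultimately show ?thesis by linarith
qed

lemma min_deg: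
  assumes sg: "simple_graph V E" and sb: "strictly_2_balanced V E" and u: "u \<in> V"
  shows "2 \<le> card {e\<in>E. u \<in> e}"
proof (rule ccontr)
  define D where "D = {e\<in>E. u \<in> e}"
  assume "\<not> 2 \<le> card {e\<in>E. u \<in> e}"
  hence D1: "card D \<le> 1" unfolding D_def by simp
  have fV: "finite V" using sg simple_graph_def by blast
  have fE: "finite E" using finite_E sg .
  have k3: "card E \<ge> 3" and h3: "card V \<ge> 3" using sb unfolding strictly_2_balanced_def by auto
  have DE: "D \<subseteq> E" unfolding D_def by auto
  have cED: "card (E - D) \<ge> card E - 1" using card_Diff_subset[OF finite_subset[OF DE fE] DE] D1 by simp
  have EDsub: "\<forall>e\<in>E - D. e \<subseteq> V - {u} \<and> card e = 2" using sg unfolding simple_graph_def D_def by auto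
  have h4: "card V \<ge> 4"
  proof (rule ccontr)
    assume "\<not> card V \<ge> 4"
    hence c2: "card (V - {u}) = 2" using h3 u fV by simp
    have "E - D \<subseteq> {V - {u}}"
    proof
      fix e assume "e \<in> E - D"
      hence "e \<subseteq> V - {u}" "card e = 2" using EDsub by auto
      hence "e = V - {u}" using card_subset_eq[of "V - {u}" e] fV c2 by auto
      thus "e \<in> {V - {u}}" by simp
    qed
    hence "card (E - D) \<le> card {V - {u}}" by (intro card_mono) auto
    hence "card (E - D) \<le> 1" by simp
    thus False using cED k3 by linarith
  qed
  have sub1: "subgraph (V - {u}) (E - D) V E" using EDsub unfolding subgraph_def by auto
  have "d2 (V - {u}) (E - D) < d2 V E"
    by (rule proper_lt[OF sg sb sub1]) (use h4 fV u in auto)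
  hence lt1: "(real (card (E - D)) - 1) / (real (card V - 1) - 2) < (real (card E) - 1) / (real (card V) - 2)"
    unfolding d2_def using fV u by (simp add: card_Diff_singleton)
  have "(real (card E) - 2) / (real (card V) - 3) \<le> (real (card (E - D)) - 1) / (real (card V - 1) - 2)"
  proof -
    have eq: "real (card V - 1) - 2 = real (card V) - 3" using h4 by (simp add: of_nat_diff)
    have "real (card E - 1) \<le> real (card (E - D))" using cED by linarith
    hence num: "real (card E) - 2 \<le> real (card (E - D)) - 1" using k3 by (simp add: of_nat_diff)
    show ?thesis unfolding eq by (rule divide_right_mono[OF num]) (use h4 in simp)
  qed
  with lt1 have "(real (card E) - 2) / (real (card V) - 3) < (real (card E) - 1) / (real (card V) - 2)"
    by linarith
  hence "(real (card E) - 2) * (real (card V) - 2) < (real (card E) - 1) * (real (card V) - 3)"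
    using h4 by (simp add: field_simps)
  hence hk: "card E + 1 < card V" by (simp add: algebra_simps) 
  show False
  proof (cases "\<exists>e1\<in>E. \<exists>e2\<in>E. e1 \<noteq> e2 \<and> e1 \<inter> e2 \<noteq> {}")
    case True
    then obtain e1 e2 where e: "e1 \<in> E" "e2 \<in> E" "e1 \<noteq> e2" "e1 \<inter> e2 \<noteq> {}" by blast
    have c: "card e1 = 2" "card e2 = 2" "e1 \<subseteq> V" "e2 \<subseteq> V" using e sg unfolding simple_graph_def by auto
    have fe: "finite e1" "finite e2" using c by (auto intro: card_ge_0_finite)
    have "card (e1 \<inter> e2) \<ge> 1" using e(4) fe by (simp add: Suc_le_eq card_gt_0_iff)
    moreover have "card (e1 \<inter> e2) \<noteq> 2"
    proof
      assume "card (e1 \<inter> e2) = 2"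
      hence "e1 \<inter> e2 = e1" "e1 \<inter> e2 = e2" using card_subset_eq fe c by (metis Int_lower1 Int_lower2)+
      thus False using e(3) by simp
    qed
    moreover have "card (e1 \<inter> e2) \<le> 2" using c fe by (metis Int_lower1 card_mono)
    ultimately have "card (e1 \<inter> e2) = 1" by linarith
    hence cu: "card (e1 \<union> e2) = 3" using card_Un_Int[OF fe] c by simp
    have sub2: "subgraph (e1 \<union> e2) {e1, e2} V E" using e c unfolding subgraph_def by auto
    have "card {e1, e2} = 2" using e(3) by simp
    hence "d2 (e1 \<union> e2) {e1, e2} < d2 V E"
      using proper_lt[OF sg sb sub2] cu k3 by fastforce
    hence "1 < (real (card E) - 1) / (real (card V) - 2)" unfolding d2_def using cu e(3) by simp
    hence "real (card V) - 2 < real (card E) - 1" using h4 by (simp add: field_simps)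
    thus False using hk by linarith
  next
    case False
    hence pd: "pairwise disjnt E" unfolding pairwise_def disjnt_def by blast
    have "card (\<Union>E) = sum card E"
      by (rule card_Union_disjoint[OF pd]) (use sg in \<open>auto simp: simple_graph_def intro: card_ge_0_finite\<close>)
    also have "\<dots> = 2 * card E" using sg by (simp add: simple_graph_def)
    finally have "2 * card E = card (\<Union>E)" by simp
    also have "\<dots> \<le> card V" using sg fV by (intro card_mono) (auto simp: simple_graph_def)
    finally have "2 * card E \<le> card V" .
    obtain e1 e2 where e: "e1 \<in> E" "e2 \<in> E" "e1 \<noteq> e2"
      using k3 card_le_Suc0_iff_eq[OF fE] by (metis not_less_eq_eq numeral_3_eq_3 le_SucI)
    hence dj: "e1 \<inter> e2 = {}" using False by blast
    have c: "card e1 = 2" "card e2 = 2" "e1 \<subseteq> V" "e2 \<subseteq> V" using e sg unfolding simple_graph_def by auto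
    have fe: "finite e1" "finite e2" using c by (auto intro: card_ge_0_finite)
    have cu: "card (e1 \<union> e2) = 4" using card_Un_disjoint[OF fe dj] c by simp
    have sub2: "subgraph (e1 \<union> e2) {e1, e2} V E" using e c unfolding subgraph_def by auto
    have "card {e1, e2} = 2" using e(3) by simp
    hence "d2 (e1 \<union> e2) {e1, e2} < d2 V E"
      using proper_lt[OF sg sb sub2] cu k3 by fastforce
    hence "1/2 < (real (card E) - 1) / (real (card V) - 2)" unfolding d2_def using cu e(3) by simp
    hence "real (card V) - 2 < 2 * (real (card E) - 1)" using h4 by (simp add: field_simps)
    moreover have "real (2 * card E) \<le> real (card V)" using \<open>2 * card E \<le> card V\<close> by (rule of_nat_mono)
    ultimately show False by simp
  qed
qed

definition injs :: "'a set \<Rightarrow> nat \<Rightarrow> ('a \<Rightarrow> nat) set" where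
  "injs V n = {f \<in> V \<rightarrow>\<^sub>E {..<n}. inj_on f V}"

definition Phi :: "'a set set \<Rightarrow> ('a \<Rightarrow> nat) \<Rightarrow> nat set set" where
  "Phi E f = (\<lambda>e. f ` e) ` E"

lemma finite_injs: "finite V \<Longrightarrow> finite (injs V n)"
  unfolding injs_def by (rule finite_subset[of _ "V \<rightarrow>\<^sub>E {..<n}"]) (auto intro: finite_PiE)

lemma copies_eq:
  assumes "simple_graph V E"
  shows "copies V E n = Phi E ` injs V n"
proof
  show "copies V E n \<subseteq> Phi E ` injs V n"
  proof
    fix c assume "c \<in> copies V E n"
    then obtain f where f: "c = (\<lambda>e. f ` e) ` E" "inj_on f V" "f ` V \<subseteq> {..<n}"
      unfolding copies_def by blast
    have "restrict f V \<in> injs V n" using f unfolding injs_def by (auto simp: inj_on_def)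
    moreover have "Phi E (restrict f V) = c"
    proof -
      have "\<And>e. e \<in> E \<Longrightarrow> restrict f V ` e = f ` e"
        using assms unfolding simple_graph_def by (auto simp: restrict_def)
      thus ?thesis unfolding Phi_def f(1) by (auto intro!: image_cong)
    qed
    ultimately show "c \<in> Phi E ` injs V n" by blast
  qed
next
  show "Phi E ` injs V n \<subseteq> copies V E n"
    unfolding Phi_def injs_def copies_def by (auto simp: PiE_iff)
qed

lemma inj_Phi:
  assumes "simple_graph V E" "inj_on f V"
  shows "inj_on (\<lambda>e. f ` e) E"
  using assms inj_on_image_eq_iff unfolding simple_graph_def inj_on_def[of "\<lambda>e. f ` e"]
  by metis

lemma card_Phi:
  assumes "simple_graph V E" "inj_on f V"
  shows "card (Phi E f) = card E"
  unfolding Phi_def by (rule card_image[OF inj_Phi[OF assms]])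

lemma card_fix2:
  assumes fV: "finite V" and ab: "a \<in> V" "b \<in> V" "a \<noteq> b" and xy: "x < n" "y < n" "x \<noteq> y"
  shows "card {f \<in> injs V n. f a = x \<and> f b = y} = falling (n - 2) (card V - 2)"
proof -
  define B where "B = V - {a, b}"
  define C where "C = {..<n} - {x, y}"
  define J where "J = {g \<in> B \<rightarrow>\<^sub>E C. inj_on g B}"
  have cB: "card B = card V - 2" unfolding B_def using fV ab by (simp add: card_Diff_subset)
  have cC: "card C = n - 2" unfolding C_def using xy by (simp add: card_Diff_subset)
  have "card J = card C ^ (card B - card B) * prod ((-) (card C)) {0..<card B}"
    unfolding J_def by (rule card_inj_on_subset_funcset) (auto simp: B_def C_def fV)
  also have "\<dots> = falling (n - 2) (card V - 2)"
    unfolding cB cC falling_def by (simp add: atLeast0LessThan)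
  finally have cJ: "card J = falling (n - 2) (card V - 2)" .
  have "bij_betw (\<lambda>g. g(a := x, b := y)) J {f \<in> injs V n. f a = x \<and> f b = y}"
  proof (rule bij_betw_byWitness[where f' = "\<lambda>f. restrict f B"])
    show "\<forall>g\<in>J. restrict (g(a := x, b := y)) B = g"
      unfolding J_def B_def by (auto simp: PiE_iff restrict_def extensional_def fun_eq_iff)
    show "\<forall>f\<in>{f \<in> injs V n. f a = x \<and> f b = y}. (restrict f B)(a := x, b := y) = f"
      unfolding injs_def B_def using ab by (auto simp: PiE_iff restrict_def extensional_def fun_eq_iff)
    show "(\<lambda>g. g(a := x, b := y)) ` J \<subseteq> {f \<in> injs V n. f a = x \<and> f b = y}"
    proof safe
      fix g assume g: "g \<in> J"
      hence g1: "\<And>z. z \<in> B \<Longrightarrow> g z \<in> C" "\<And>z. z \<notin> B \<Longrightarrow> g z = undefined" "inj_on g B"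
        unfolding J_def by (auto simp: PiE_iff extensional_def)
      have i1: "g(a := x, b := y) \<in> V \<rightarrow>\<^sub>E {..<n}"
        using g1 ab xy unfolding B_def C_def by (auto simp: PiE_iff extensional_def)
      have i2: "inj_on (g(a := x, b := y)) V"
        unfolding inj_on_def
      proof (intro ballI impI)
        fix z w assume zw: "z \<in> V" "w \<in> V" "(g(a := x, b := y)) z = (g(a := x, b := y)) w"
        show "z = w"
        proof -
          have gz: "\<And>z. z \<in> V \<Longrightarrow> z \<noteq> a \<Longrightarrow> z \<noteq> b \<Longrightarrow> g z \<noteq> x \<and> g z \<noteq> y \<and> z \<in> B"
            using g1(1) unfolding B_def C_def by blast
          show ?thesis
          proof (cases "z = a \<or> z = b \<or> w = a \<or> w = b")
            case True
            then show ?thesis using zw gz ab(3) xy(3) by (smt (verit) fun_upd_apply)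
          next
            case False
            then have "g z = g w" using zw by simp
            then show ?thesis using g1(3) gz False zw unfolding inj_on_def by blast
          qed
        qed
      qed
      show "g(a := x, b := y) \<in> injs V n" using i1 i2 unfolding injs_def by blast
      show "(g(a := x, b := y)) a = x" using ab by simp
      show "(g(a := x, b := y)) b = y" by simp
    qed
    show "(\<lambda>f. restrict f B) ` {f \<in> injs V n. f a = x \<and> f b = y} \<subseteq> J"
    proof (rule subsetI)
      fix r assume "r \<in> (\<lambda>f. restrict f B) ` {f \<in> injs V n. f a = x \<and> f b = y}"
      then obtain f where f: "f \<in> injs V n" "f a = x" "f b = y" and r: "r = restrict f B" by blast
      have fi: "inj_on f V" "\<And>z. z \<in> V \<Longrightarrow> f z < n" using f(1) unfolding injs_def by (auto simp: PiE_iff)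
      have "\<And>z. z \<in> B \<Longrightarrow> f z \<noteq> x \<and> f z \<noteq> y"
        using fi(1) f(2,3) ab unfolding B_def inj_on_def by blast
      thus "r \<in> J" unfolding r
        using fi unfolding J_def B_def C_def by (auto simp: inj_on_def)
    qed
  qed
  hence "card {f \<in> injs V n. f a = x \<and> f b = y} = card J" by (simp add: bij_betw_same_card)
  with cJ show ?thesis by simp
qed

lemma count_edge:
  assumes sg: "simple_graph V E" and e: "e \<in> E" and v: "v \<in> Kedges n"
  shows "card {f \<in> injs V n. f ` e = v} = 2 * falling (n - 2) (card V - 2)"
proof -
  have fV: "finite V" using sg simple_graph_def by blast
  have "card e = 2" using e sg unfolding simple_graph_def by blast
  then obtain a b where ab: "e = {a, b}" "a \<noteq> b" unfolding card_2_iff by blast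
  have abV: "a \<in> V" "b \<in> V" using e sg ab unfolding simple_graph_def by auto
  have "card v = 2" using v unfolding Kedges_def by blast
  then obtain x y where xy: "v = {x, y}" "x \<noteq> y" unfolding card_2_iff by blast
  have xyn: "x < n" "y < n" using v xy unfolding Kedges_def by auto
  have iff: "\<And>f. f ` e = v \<longleftrightarrow> (f a = x \<and> f b = y \<or> f a = y \<and> f b = x)"
    unfolding ab xy by (simp add: doubleton_eq_iff)
  have "{f \<in> injs V n. f ` e = v} = {f \<in> injs V n. f a = x \<and> f b = y} \<union> {f \<in> injs V n. f a = y \<and> f b = x}"
    unfolding iff by blast
  have U: "{f \<in> injs V n. f ` e = v} = {f \<in> injs V n. f a = x \<and> f b = y} \<union> {f \<in> injs V n. f a = y \<and> f b = x}"
    unfolding iff by blast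
  have F2: "finite {f \<in> injs V n. f a = y \<and> f b = x}" by (rule finite_subset[OF _ finite_injs[OF fV]]) blast
  have F1: "finite {f \<in> injs V n. f a = x \<and> f b = y}" by (rule finite_subset[OF _ finite_injs[OF fV]]) blast
  have D: "{f \<in> injs V n. f a = x \<and> f b = y} \<inter> {f \<in> injs V n. f a = y \<and> f b = x} = {}" using xy(2) by blast
  have C: "2 * falling (n - 2) (card V - 2) = card {f \<in> injs V n. f a = x \<and> f b = y} + card {f \<in> injs V n. f a = y \<and> f b = x}"
    using card_fix2[OF fV abV ab(2) xyn xy(2)] card_fix2[OF fV abV ab(2) xyn(2,1) not_sym[OF xy(2)]] by simp
  show ?thesis unfolding U C by (rule card_Un_disjoint[OF F1 F2 D])
qed

lemma Union_Phi: "\<Union>(Phi E f) = f ` \<Union>E"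
  unfolding Phi_def by auto

lemma fiber:
  assumes sg: "simple_graph V E" and UE: "\<Union>E = V" and f0: "f0 \<in> injs V n"
  shows "card {g \<in> injs V n. Phi E g = Phi E f0} = card (Aut V E)"
proof -
  have f0i: "inj_on f0 V" and f0n: "\<And>x. x \<in> V \<Longrightarrow> f0 x < n" using f0 unfolding injs_def by (auto simp: PiE_iff)
  have eV: "\<And>e. e \<in> E \<Longrightarrow> e \<subseteq> V" using sg unfolding simple_graph_def by auto
  define \<phi> where "\<phi> = (\<lambda>\<sigma>::'a \<Rightarrow> 'a. restrict (f0 \<circ> \<sigma>) V)"
  define \<psi> where "\<psi> = (\<lambda>g::'a \<Rightarrow> nat. (\<lambda>x. if x \<in> V then inv_into V f0 (g x) else x))"
  have "bij_betw \<phi> (Aut V E) {g \<in> injs V n. Phi E g = Phi E f0}"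
  proof (rule bij_betw_byWitness[where f' = \<psi>])
    show "\<forall>\<sigma>\<in>Aut V E. \<psi> (\<phi> \<sigma>) = \<sigma>"
    proof
      fix \<sigma> assume "\<sigma> \<in> Aut V E"
      hence p: "\<sigma> permutes V" unfolding Aut_def by blast
      show "\<psi> (\<phi> \<sigma>) = \<sigma>"
      proof
        fix x show "\<psi> (\<phi> \<sigma>) x = \<sigma> x"
          using p f0i unfolding \<psi>_def \<phi>_def
          by (auto simp: permutes_in_image permutes_not_in)
      qed
    qed
    show "\<forall>g\<in>{g \<in> injs V n. Phi E g = Phi E f0}. \<phi> (\<psi> g) = g"
    proof
      fix g assume g: "g \<in> {g \<in> injs V n. Phi E g = Phi E f0}"
      have gV: "g ` V = f0 ` V" using g Union_Phi[of E g] Union_Phi[of E f0] UE by simp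
      have ge: "g \<in> extensional V" using g unfolding injs_def by (auto simp: PiE_iff)
      show "\<phi> (\<psi> g) = g"
      proof
        fix x show "\<phi> (\<psi> g) x = g x"
        proof (cases "x \<in> V")
          case True
          hence "g x \<in> f0 ` V" using gV by blast
          thus ?thesis using True unfolding \<phi>_def \<psi>_def by (simp add: f_inv_into_f)
        next
          case False
          thus ?thesis using ge unfolding \<phi>_def \<psi>_def by (simp add: extensional_def)
        qed
      qed
    qed
    show "\<phi> ` Aut V E \<subseteq> {g \<in> injs V n. Phi E g = Phi E f0}"
    proof (rule subsetI)
      fix r assume "r \<in> \<phi> ` Aut V E"
      then obtain \<sigma> where s: "\<sigma> \<in> Aut V E" and r: "r = \<phi> \<sigma>" by blast
      have p: "\<sigma> permutes V" and pe: "(\<lambda>e. \<sigma> ` e) ` E = E" using s unfolding Aut_def by auto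
      have sV: "\<And>x. x \<in> V \<Longrightarrow> \<sigma> x \<in> V" using p by (simp add: permutes_in_image)
      have si: "inj_on \<sigma> V" using p by (meson permutes_inj_on)
      have r1: "r \<in> V \<rightarrow>\<^sub>E {..<n}" unfolding r \<phi>_def using sV f0n by auto
      have r2: "inj_on r V" unfolding r \<phi>_def inj_on_def
        using si f0i sV unfolding inj_on_def by auto
      have "Phi E r = (\<lambda>e. f0 ` e) ` ((\<lambda>e. \<sigma> ` e) ` E)"
      proof -
        have "\<And>e. e \<in> E \<Longrightarrow> r ` e = f0 ` \<sigma> ` e" unfolding r \<phi>_def using eV by (auto simp: restrict_def)
        thus ?thesis unfolding Phi_def image_image by (auto intro!: image_cong)
      qed
      hence r3: "Phi E r = Phi E f0" unfolding pe Phi_def .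
      show "r \<in> {g \<in> injs V n. Phi E g = Phi E f0}" using r1 r2 r3 unfolding injs_def by blast
    qed
    show "\<psi> ` {g \<in> injs V n. Phi E g = Phi E f0} \<subseteq> Aut V E"
    proof (rule subsetI)
      fix r assume "r \<in> \<psi> ` {g \<in> injs V n. Phi E g = Phi E f0}"
      then obtain g where g: "g \<in> injs V n" "Phi E g = Phi E f0" and r: "r = \<psi> g" by blast
      have gV: "g ` V = f0 ` V" using g Union_Phi[of E g] Union_Phi[of E f0] UE by simp
      have gi: "inj_on g V" using g unfolding injs_def by blast
      have b1: "bij_betw g V (f0 ` V)" using gi gV unfolding bij_betw_def by blast
      have b2: "bij_betw (inv_into V f0) (f0 ` V) V" using f0i by (simp add: bij_betw_inv_into inj_on_imp_bij_betw)
      have "bij_betw (inv_into V f0 \<circ> g) V V" by (rule bij_betw_trans[OF b1 b2])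
      hence "bij_betw r V V" by (rule bij_betw_cong[THEN iffD1, rotated]) (auto simp: r \<psi>_def)
      moreover have "{x. r x \<noteq> x} \<subseteq> V" unfolding r \<psi>_def by auto
      ultimately have p: "r permutes V" by (simp add: permutes_altdef)
      have re: "\<And>e. e \<in> E \<Longrightarrow> r ` e = inv_into V f0 ` g ` e" unfolding r \<psi>_def using eV by auto
      have "(\<lambda>e. r ` e) ` E = E"
      proof
        show "(\<lambda>e. r ` e) ` E \<subseteq> E"
        proof (rule subsetI)
          fix q assume "q \<in> (\<lambda>e. r ` e) ` E"
          then obtain e where e: "e \<in> E" "q = r ` e" by blast
          have "g ` e \<in> Phi E f0" using g(2) e(1) unfolding Phi_def by blast
          then obtain e' where e': "e' \<in> E" "g ` e = f0 ` e'" unfolding Phi_def by blast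
          have "q = e'" using e e' re eV f0i by simp
          thus "q \<in> E" using e' by simp
        qed
        show "E \<subseteq> (\<lambda>e. r ` e) ` E"
        proof (rule subsetI)
          fix e' assume e': "e' \<in> E"
          have "f0 ` e' \<in> Phi E g" using g(2) e' unfolding Phi_def by auto
          then obtain e where e: "e \<in> E" "f0 ` e' = g ` e" unfolding Phi_def by blast
          have "r ` e = inv_into V f0 ` f0 ` e'" using re[OF e(1)] e(2) by simp
          also have "\<dots> = e'" by (rule inv_into_image_cancel[OF f0i eV[OF e']])
          finally have "r ` e = e'" .
          thus "e' \<in> (\<lambda>e. r ` e) ` E" using e(1) by blast
        qed
      qed
      thus "r \<in> Aut V E" using p unfolding Aut_def by blast
    qed
  qed
  thus ?thesis by (simp add: bij_betw_same_card)
qed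

lemma cardP: "finite A \<Longrightarrow> card {x\<in>A. P x} = (\<Sum>x\<in>A. if P x then 1 else 0)"
  by (simp add: sum.If_cases Int_def)

lemma degree_formula:
  assumes sg: "simple_graph V E" and UE: "\<Union>E = V" and v: "v \<in> Kedges n"
  shows "card (Aut V E) * degree (copies V E n) v = card E * (2 * falling (n - 2) (card V - 2))"
proof -
  define I where "I = injs V n"
  have fV: "finite V" using sg simple_graph_def by blast
  have fE: "finite E" using finite_E[OF sg] .
  have fI: "finite I" unfolding I_def by (rule finite_injs[OF fV])
  have "(\<Sum>f\<in>I. card {e\<in>E. f ` e = v}) = (\<Sum>f\<in>I. \<Sum>e\<in>E. if f ` e = v then 1 else 0)"
    using fE by (simp add: cardP)
  also have "\<dots> = (\<Sum>e\<in>E. \<Sum>f\<in>I. if f ` e = v then 1 else 0)" by (rule sum.swap)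
  also have "\<dots> = (\<Sum>e\<in>E. card {f\<in>I. f ` e = v})" using fI by (simp add: cardP)
  also have "\<dots> = (\<Sum>e\<in>E. 2 * falling (n - 2) (card V - 2))"
    unfolding I_def using count_edge[OF sg _ v] by simp
  also have "\<dots> = card E * (2 * falling (n - 2) (card V - 2))" by simp
  finally have s1: "(\<Sum>f\<in>I. card {e\<in>E. f ` e = v}) = card E * (2 * falling (n - 2) (card V - 2))" .
  have s2: "card {e\<in>E. f ` e = v} = (if v \<in> Phi E f then 1 else 0)" if f: "f \<in> I" for f
  proof (cases "v \<in> Phi E f")
    case True
    then obtain e0 where e0: "e0 \<in> E" "v = f ` e0" unfolding Phi_def by blast
    have fi: "inj_on f V" using f unfolding I_def injs_def by blast
    have "{e\<in>E. f ` e = v} = {e0}" using inj_Phi[OF sg fi] e0 unfolding inj_on_def by blast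
    thus ?thesis using True by simp
  next
    case False
    hence "{e\<in>E. f ` e = v} = {}" unfolding Phi_def by blast
    thus ?thesis using False by (metis card.empty)
  qed
  have "(\<Sum>f\<in>I. card {e\<in>E. f ` e = v}) = (\<Sum>f\<in>I. if v \<in> Phi E f then 1 else 0)"
    using s2 by (rule sum.cong[OF refl])
  also have "\<dots> = card {f\<in>I. v \<in> Phi E f}" using fI by (simp add: cardP)
  finally have s3: "card {f\<in>I. v \<in> Phi E f} = card E * (2 * falling (n - 2) (card V - 2))" using s1 by simp
  define Cs where "Cs = {c \<in> copies V E n. v \<in> c}"
  have cop: "copies V E n = Phi E ` I" unfolding I_def by (rule copies_eq[OF sg])
  have fC: "finite Cs" unfolding Cs_def cop using fI by simp
  have "{f\<in>I. v \<in> Phi E f} = (\<Union>c\<in>Cs. {g\<in>I. Phi E g = c})" unfolding Cs_def cop by blast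
  hence "card {f\<in>I. v \<in> Phi E f} = (\<Sum>c\<in>Cs. card {g\<in>I. Phi E g = c})"
    using card_UN_disjoint[OF fC, of "\<lambda>c. {g\<in>I. Phi E g = c}"] fI by auto
  also have "\<dots> = (\<Sum>c\<in>Cs. card (Aut V E))"
  proof (rule sum.cong[OF refl])
    fix c assume "c \<in> Cs"
    then obtain f0 where f0: "f0 \<in> I" "c = Phi E f0" unfolding Cs_def cop by blast
    show "card {g\<in>I. Phi E g = c} = card (Aut V E)" unfolding f0(2) I_def
      by (rule fiber[OF sg UE]) (use f0 I_def in simp)
  qed
  also have "\<dots> = card Cs * card (Aut V E)" by simp
  finally show ?thesis using s3 unfolding degree_def Cs_def by (simp add: mult.commute)
qed

lemma card_restr:
  assumes fV: "finite V" and WV: "W \<subseteq> V" and fU: "finite U"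
  shows "card {f \<in> V \<rightarrow>\<^sub>E {..<n}. f ` W \<subseteq> U} \<le> card U ^ card W * n ^ (card V - card W)"
proof -
  have "{f \<in> V \<rightarrow>\<^sub>E {..<n}. f ` W \<subseteq> U} \<subseteq> PiE V (\<lambda>z. if z \<in> W then U else {..<n})"
    using WV by (auto simp: PiE_iff extensional_def image_subset_iff)
  hence "card {f \<in> V \<rightarrow>\<^sub>E {..<n}. f ` W \<subseteq> U} \<le> card (PiE V (\<lambda>z. if z \<in> W then U else {..<n}))"
    by (rule card_mono[rotated]) (use fV fU in \<open>auto intro!: finite_PiE\<close>)
  also have "\<dots> = (\<Prod>z\<in>V. card (if z \<in> W then U else {..<n}))" using fV by (rule card_PiE)
  also have "\<dots> = (\<Prod>z\<in>V. if z \<in> W then card U else n)" by (rule prod.cong) auto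
  also have "\<dots> = (\<Prod>z\<in>V \<inter> {z. z \<in> W}. card U) * (\<Prod>z\<in>V \<inter> - {z. z \<in> W}. n)"
    using fV by (rule prod.If_cases)
  also have "V \<inter> {z. z \<in> W} = W" using WV by auto
  also have "V \<inter> - {z. z \<in> W} = V - W" by auto
  also have "(\<Prod>z\<in>W. card U) * (\<Prod>z\<in>V - W. n) = card U ^ card W * n ^ (card V - card W)"
    using fV WV by (simp add: card_Diff_subset finite_subset)
  finally show ?thesis .
qed

lemma codeg_bound:
  assumes sg: "simple_graph V E" and S: "S \<subseteq> Kedges n" "card S = l"
  shows "card {c \<in> copies V E n. S \<subseteq> c}
     \<le> (\<Sum>T\<in>{T. T \<subseteq> E \<and> card T = l}. (2*l) ^ card (\<Union>T) * n ^ (card V - card (\<Union>T)))"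
proof -
  define I where "I = injs V n"
  have fV: "finite V" using sg simple_graph_def by blast
  have fE: "finite E" using finite_E[OF sg] .
  have fI: "finite I" unfolding I_def by (rule finite_injs[OF fV])
  have eV: "\<And>e. e \<in> E \<Longrightarrow> e \<subseteq> V" using sg unfolding simple_graph_def by auto
  have cop: "copies V E n = Phi E ` I" unfolding I_def by (rule copies_eq[OF sg])
  define \<T> where "\<T> = {T. T \<subseteq> E \<and> card T = l}"
  have fT: "finite \<T>" unfolding \<T>_def using fE by (auto intro: finite_subset[of _ "Pow E"])
  have fS: "finite S"
  proof -
    have "finite (Kedges n)" unfolding Kedges_def by (rule finite_subset[of _ "Pow {..<n}"]) auto
    thus ?thesis using S(1) finite_subset by blast
  qed
  have "{c \<in> copies V E n. S \<subseteq> c} = Phi E ` {f\<in>I. S \<subseteq> Phi E f}" unfolding cop by blast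
  hence "card {c \<in> copies V E n. S \<subseteq> c} \<le> card {f\<in>I. S \<subseteq> Phi E f}"
    by (simp add: card_image_le fI)
  also have "\<dots> \<le> card (\<Union>T\<in>\<T>. {f \<in> V \<rightarrow>\<^sub>E {..<n}. f ` \<Union>T \<subseteq> \<Union>S})"
  proof (rule card_mono)
    show "finite (\<Union>T\<in>\<T>. {f \<in> V \<rightarrow>\<^sub>E {..<n}. f ` \<Union>T \<subseteq> \<Union>S})"
      using fT fV by (auto intro: finite_subset[of _ "V \<rightarrow>\<^sub>E {..<n}"] finite_PiE)
    show "{f\<in>I. S \<subseteq> Phi E f} \<subseteq> (\<Union>T\<in>\<T>. {f \<in> V \<rightarrow>\<^sub>E {..<n}. f ` \<Union>T \<subseteq> \<Union>S})"
    proof (rule subsetI)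
      fix f assume f: "f \<in> {f\<in>I. S \<subseteq> Phi E f}"
      have fi: "inj_on f V" and fP: "f \<in> V \<rightarrow>\<^sub>E {..<n}" using f unfolding I_def injs_def by auto
      define T where "T = {e\<in>E. f ` e \<in> S}"
      have TS: "(\<lambda>e. f ` e) ` T = S" using f unfolding T_def Phi_def by blast
      have "inj_on (\<lambda>e. f ` e) T" using inj_Phi[OF sg fi] unfolding T_def by (rule inj_on_subset) auto
      hence "card T = l" using TS S(2) card_image by fastforce
      hence "T \<in> \<T>" unfolding \<T>_def T_def by auto
      moreover have "f ` \<Union>T \<subseteq> \<Union>S" unfolding T_def by blast
      ultimately show "f \<in> (\<Union>T\<in>\<T>. {f \<in> V \<rightarrow>\<^sub>E {..<n}. f ` \<Union>T \<subseteq> \<Union>S})" using fP by blast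
    qed
  qed
  also have "\<dots> \<le> (\<Sum>T\<in>\<T>. card {f \<in> V \<rightarrow>\<^sub>E {..<n}. f ` \<Union>T \<subseteq> \<Union>S})" by (rule card_UN_le[OF fT])
  also have "\<dots> \<le> (\<Sum>T\<in>\<T>. (2*l) ^ card (\<Union>T) * n ^ (card V - card (\<Union>T)))"
  proof (rule sum_mono)
    fix T assume T: "T \<in> \<T>"
    have TV: "\<Union>T \<subseteq> V" using T eV unfolding \<T>_def by blast
    have fUS: "finite (\<Union>S)" using fS S(1) unfolding Kedges_def by (auto intro: finite_subset[of _ "{..<n}"])
    have "card (\<Union>S) \<le> sum card S"
      by (rule card_Union_le_sum_card)
    also have "sum card S = 2 * l" using S unfolding Kedges_def by (simp add: subset_iff)
    finally have cS: "card (\<Union>S) \<le> 2 * l" .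
    have "card {f \<in> V \<rightarrow>\<^sub>E {..<n}. f ` \<Union>T \<subseteq> \<Union>S} \<le> card (\<Union>S) ^ card (\<Union>T) * n ^ (card V - card (\<Union>T))"
      by (rule card_restr[OF fV TV fUS])
    also have "\<dots> \<le> (2*l) ^ card (\<Union>T) * n ^ (card V - card (\<Union>T))"
      using cS by (intro mult_right_mono power_mono) auto
    finally show "card {f \<in> V \<rightarrow>\<^sub>E {..<n}. f ` \<Union>T \<subseteq> \<Union>S} \<le> (2*l) ^ card (\<Union>T) * n ^ (card V - card (\<Union>T))" .
  qed
  finally show ?thesis unfolding \<T>_def .
qed

lemma gamma_bound:
  assumes sg: "simple_graph V E" and sb: "strictly_2_balanced V E"
    and v: "v \<in> Kedges n" and v': "v' \<in> Kedges n" and vv: "v \<noteq> v'"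
  shows "card {S. S \<subseteq> Kedges n \<and> card S = card E - 1 \<and> insert v S \<in> copies V E n \<and> insert v' S \<in> copies V E n}
     \<le> card {W. W \<subseteq> V \<and> card W = 3} * 4 ^ 3 * n ^ (card V - 3)"
proof -
  define I where "I = injs V n"
  have fV: "finite V" using sg simple_graph_def by blast
  have fE: "finite E" using finite_E[OF sg] .
  have fI: "finite I" unfolding I_def by (rule finite_injs[OF fV])
  have eV: "\<And>e. e \<in> E \<Longrightarrow> e \<subseteq> V" using sg unfolding simple_graph_def by auto
  have k3: "card E \<ge> 3" using sb unfolding strictly_2_balanced_def by auto
  have cop: "copies V E n = Phi E ` I" unfolding I_def by (rule copies_eq[OF sg])
  have cardc: "\<And>c. c \<in> copies V E n \<Longrightarrow> card c = card E"
    using card_Phi[OF sg] unfolding cop I_def injs_def by auto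
  have cv: "card v = 2" "card v' = 2" using v v' unfolding Kedges_def by auto
  have fv: "finite v" "finite v'" using cv by (auto intro: card_ge_0_finite)
  define \<S> where "\<S> = {S. S \<subseteq> Kedges n \<and> card S = card E - 1 \<and> insert v S \<in> copies V E n \<and> insert v' S \<in> copies V E n}"
  define \<C> where "\<C> = {c \<in> copies V E n. v \<in> c \<and> v' \<subseteq> \<Union>c}"
  have vS: "v \<notin> S" if S: "S \<in> \<S>" for S
  proof
    assume "v \<in> S"
    hence "insert v S = S" by blast
    hence "card (insert v S) = card E - 1" using S unfolding \<S>_def by simp
    moreover have "card (insert v S) = card E" using S cardc unfolding \<S>_def by blast
    ultimately show False using k3 by simp
  qed
  have "card \<S> \<le> card \<C>"
  proof (rule card_inj_on_le)
    show "inj_on (insert v) \<S>"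
    proof (rule inj_onI)
      fix S1 S2 assume a: "S1 \<in> \<S>" "S2 \<in> \<S>" and eq: "insert v S1 = insert v S2"
      have "S1 = insert v S1 - {v}" using vS[OF a(1)] by simp
      also have "\<dots> = insert v S2 - {v}" using eq by simp
      also have "\<dots> = S2" using vS[OF a(2)] by simp
      finally show "S1 = S2" .
    qed
    show "finite \<C>" unfolding \<C>_def cop using fI by simp
    show "insert v ` \<S> \<subseteq> \<C>"
    proof (rule subsetI)
      fix c assume "c \<in> insert v ` \<S>"
      then obtain S where S: "S \<in> \<S>" and c: "c = insert v S" by blast
      have c1: "c \<in> copies V E n" using S c unfolding \<S>_def by blast
      have "v' \<subseteq> \<Union>c"
      proof
        fix x assume x: "x \<in> v'"
        have "insert v' S \<in> Phi E ` I" using S cop unfolding \<S>_def by auto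
        then obtain g where g: "g \<in> I" "Phi E g = insert v' S" by blast
        have gi: "inj_on g V" using g unfolding I_def injs_def by blast
        have "v' \<in> Phi E g" using g by simp
        then obtain e' where e': "e' \<in> E" "v' = g ` e'" unfolding Phi_def by blast
        then obtain y where y: "y \<in> e'" "x = g y" using x by blast
        have yV: "y \<in> V" using y e' eV by blast
        have "2 \<le> card {e\<in>E. y \<in> e}" by (rule min_deg[OF sg sb yV])
        hence "\<not> card {e\<in>E. y \<in> e} \<le> Suc 0" by simp
        moreover have fin: "finite {e\<in>E. y \<in> e}" using fE by simp
        ultimately have "\<not> (\<forall>a1\<in>{e\<in>E. y \<in> e}. \<forall>a2\<in>{e\<in>E. y \<in> e}. a1 = a2)"
          using card_le_Suc0_iff_eq[OF fin] by blast
        then obtain e1 e2 where e12: "e1 \<in> E" "e2 \<in> E" "y \<in> e1" "y \<in> e2" "e1 \<noteq> e2" by blast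
        have ne: "g ` e1 \<noteq> g ` e2" using inj_Phi[OF sg gi] e12 unfolding inj_on_def by blast
        have "g ` e1 \<in> Phi E g" "g ` e2 \<in> Phi E g" using e12 unfolding Phi_def by auto
        hence in12: "g ` e1 \<in> insert v' S" "g ` e2 \<in> insert v' S" using g(2) by simp_all
        have "g ` e1 \<in> S \<or> g ` e2 \<in> S" using ne in12 by auto
        moreover have "x \<in> g ` e1" "x \<in> g ` e2" using y e12 by auto
        ultimately have "x \<in> \<Union>S" by blast
        thus "x \<in> \<Union>c" using c by blast
      qed
      thus "c \<in> \<C>" using c1 c unfolding \<C>_def by blast
    qed
  qed
  also have "card \<C> \<le> card {f\<in>I. v \<in> Phi E f \<and> v' \<subseteq> \<Union>(Phi E f)}"
  proof -
    have "\<C> = Phi E ` {f\<in>I. v \<in> Phi E f \<and> v' \<subseteq> \<Union>(Phi E f)}" unfolding \<C>_def cop by blast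
    thus ?thesis by (simp add: card_image_le fI)
  qed
  also have "\<dots> \<le> card (\<Union>W\<in>{W. W \<subseteq> V \<and> card W = 3}. {f \<in> V \<rightarrow>\<^sub>E {..<n}. f ` W \<subseteq> v \<union> v'})"
  proof (rule card_mono)
    show "finite (\<Union>W\<in>{W. W \<subseteq> V \<and> card W = 3}. {f \<in> V \<rightarrow>\<^sub>E {..<n}. f ` W \<subseteq> v \<union> v'})"
      using fV by (auto intro: finite_subset[of _ "V \<rightarrow>\<^sub>E {..<n}"] finite_PiE)
    show "{f\<in>I. v \<in> Phi E f \<and> v' \<subseteq> \<Union>(Phi E f)} \<subseteq> (\<Union>W\<in>{W. W \<subseteq> V \<and> card W = 3}. {f \<in> V \<rightarrow>\<^sub>E {..<n}. f ` W \<subseteq> v \<union> v'})"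
    proof (rule subsetI)
      fix f assume f: "f \<in> {f\<in>I. v \<in> Phi E f \<and> v' \<subseteq> \<Union>(Phi E f)}"
      have fP: "f \<in> V \<rightarrow>\<^sub>E {..<n}" using f unfolding I_def injs_def by auto
      obtain e where e: "e \<in> E" "v = f ` e" using f unfolding Phi_def by blast
      have "\<not> v' \<subseteq> v"
      proof
        assume "v' \<subseteq> v"
        hence "v' = v" by (rule card_subset_eq[OF fv(1)]) (simp add: cv)
        thus False using vv by simp
      qed
      then obtain x where x: "x \<in> v'" "x \<notin> v" by blast
      have "x \<in> \<Union>(Phi E f)" using f x by blast
      hence "x \<in> f ` \<Union>E" by (simp add: Union_Phi)
      then obtain y where y: "y \<in> \<Union>E" "x = f y" by blast
      have yV: "y \<in> V" using y eV by blast
      have ye: "y \<notin> e" using x y e by blast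
      have ce: "card e = 2" "finite e" using e sg unfolding simple_graph_def by (auto intro: card_ge_0_finite)
      have "insert y e \<subseteq> V" "card (insert y e) = 3" using yV eV[OF e(1)] ye ce by auto
      moreover have "f ` insert y e \<subseteq> v \<union> v'" using x y e by auto
      ultimately show "f \<in> (\<Union>W\<in>{W. W \<subseteq> V \<and> card W = 3}. {f \<in> V \<rightarrow>\<^sub>E {..<n}. f ` W \<subseteq> v \<union> v'})"
        using fP by blast
    qed
  qed
  also have "\<dots> \<le> (\<Sum>W\<in>{W. W \<subseteq> V \<and> card W = 3}. card {f \<in> V \<rightarrow>\<^sub>E {..<n}. f ` W \<subseteq> v \<union> v'})"
    by (rule card_UN_le) (use fV in \<open>auto intro: finite_subset[of _ "Pow V"]\<close>)
  also have "\<dots> \<le> (\<Sum>W\<in>{W. W \<subseteq> V \<and> card W = 3}. 4 ^ 3 * n ^ (card V - 3))"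
  proof (rule sum_mono)
    fix W assume W: "W \<in> {W. W \<subseteq> V \<and> card W = 3}"
    have cu: "card (v \<union> v') \<le> 4" using card_Un_le[of v v'] cv by simp
    have "card {f \<in> V \<rightarrow>\<^sub>E {..<n}. f ` W \<subseteq> v \<union> v'} \<le> card (v \<union> v') ^ card W * n ^ (card V - card W)"
      using W fv by (intro card_restr[OF fV]) auto
    also have "\<dots> \<le> 4 ^ 3 * n ^ (card V - 3)"
    proof -
      have cW: "card W = 3" using W by simp
      show ?thesis unfolding cW by (intro mult_right_mono power_mono cu) simp_all
    qed
    finally show "card {f \<in> V \<rightarrow>\<^sub>E {..<n}. f ` W \<subseteq> v \<union> v'} \<le> 4 ^ 3 * n ^ (card V - 3)" .
  qed
  also have "\<dots> = card {W. W \<subseteq> V \<and> card W = 3} * 4 ^ 3 * n ^ (card V - 3)" by simp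
  finally show ?thesis unfolding \<S>_def .
qed

lemma asym_main:
  fixes F D :: "nat \<Rightarrow> real" and C c p :: real and a b N :: nat
  assumes bnd: "\<forall>n\<ge>N. 0 \<le> F n \<and> F n \<le> C * real n ^ b"
    and low: "\<forall>n\<ge>N. c * real n ^ a \<le> D n" and c: "c > 0" and p: "p > 0"
    and ba: "real b < real a * p"
  shows "F \<in> o(\<lambda>n. D n powr p)"
proof -
  have 1: "F \<in> O(\<lambda>n. real n powr real b)"
  proof (rule bigoI)
    show "eventually (\<lambda>n. norm (F n) \<le> C * norm (real n powr real b)) sequentially"
    proof (rule eventually_sequentiallyI[of "max N 1"])
      fix n assume n: "max N 1 \<le> n"
      hence "0 \<le> F n \<and> F n \<le> C * real n ^ b" using bnd by simp
      moreover have "real n powr real b = real n ^ b" using n by (simp add: powr_realpow)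
      ultimately show "norm (F n) \<le> C * norm (real n powr real b)" by simp
    qed
  qed
  have 2: "(\<lambda>n. real n powr real b) \<in> o(\<lambda>n. real n powr (real a * p))"
    using powr_smallo_iff[OF filterlim_real_sequentially] ba by simp
  have 3: "(\<lambda>n. real n powr (real a * p)) \<in> O(\<lambda>n. D n powr p)"
  proof (rule bigoI)
    show "eventually (\<lambda>n. norm (real n powr (real a * p)) \<le> (1 / c powr p) * norm (D n powr p)) sequentially"
    proof (rule eventually_sequentiallyI[of "max N 1"])
      fix n assume n: "max N 1 \<le> n"
      hence l: "c * real n ^ a \<le> D n" using low by simp
      have np: "real n > 0" using n by simp
      have "(c * real n ^ a) powr p \<le> D n powr p"
        by (rule powr_mono2) (use p c np l in auto)
      moreover have "(c * real n ^ a) powr p = c powr p * real n powr (real a * p)"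
        using c np by (simp add: powr_mult powr_powr flip: powr_realpow)
      ultimately have "c powr p * real n powr (real a * p) \<le> D n powr p" by simp
      hence "real n powr (real a * p) \<le> (1 / c powr p) * D n powr p"
        using c by (simp add: field_simps)
      thus "norm (real n powr (real a * p)) \<le> (1 / c powr p) * norm (D n powr p)" by simp
    qed
  qed
  show ?thesis by (rule landau_o.small_big_trans[OF landau_o.big_small_trans[OF 1 2] 3])
qed

lemma falling_lower:
  assumes "h \<le> n"
  shows "(n - h) ^ (h - 2) \<le> falling (n - 2) (h - 2)"
proof -
  have "(n - h) ^ (h - 2) = (\<Prod>i<h - 2. n - h)" by simp
  also have "\<dots> \<le> (\<Prod>i<h - 2. n - 2 - i)" by (rule prod_mono) (use assms in auto)
  finally show ?thesis unfolding falling_def .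
qed

lemma Delta_lower:
  assumes h2: "2 \<le> h" and A: "A > 0"
  shows "\<forall>n\<ge>2*h. (2 * real k / real A * (1/2) ^ (h - 2)) * real n ^ (h - 2)
            \<le> 2 * real k * real (falling (n - 2) (h - 2)) / real A"
proof (intro allI impI)
  fix n assume n: "2 * h \<le> n"
  have "real (n - h) ^ (h - 2) \<le> real (falling (n - 2) (h - 2))"
    using falling_lower[of h n] n by (metis of_nat_le_iff of_nat_power le_trans mult_le_cancel1 le_add2 mult_2)
  moreover have "(real n / 2) ^ (h - 2) \<le> real (n - h) ^ (h - 2)"
    using n by (intro power_mono) (auto simp: of_nat_diff)
  ultimately have "(real n / 2) ^ (h - 2) \<le> real (falling (n - 2) (h - 2))" by (rule order.trans[rotated])
  hence "(1/2) ^ (h - 2) * real n ^ (h - 2) \<le> real (falling (n - 2) (h - 2))"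
    by (simp add: power_divide field_simps)
  hence "(2 * real k / real A) * ((1/2) ^ (h - 2) * real n ^ (h - 2)) \<le> (2 * real k / real A) * real (falling (n - 2) (h - 2))"
    using A by (intro mult_left_mono) auto
  thus "(2 * real k / real A * (1/2) ^ (h - 2)) * real n ^ (h - 2) \<le> 2 * real k * real (falling (n - 2) (h - 2)) / real A"
    by (simp add: field_simps)
qed

lemma two_edges:
  assumes "card e1 = 2" "card e2 = 2" "e1 \<noteq> e2"
  shows "3 \<le> card (e1 \<union> e2)"
proof -
  have fe: "finite e1" "finite e2" using assms by (auto intro: card_ge_0_finite)
  have "card (e1 \<inter> e2) \<noteq> 2"
  proof
    assume "card (e1 \<inter> e2) = 2"
    hence "e1 \<inter> e2 = e1" "e1 \<inter> e2 = e2" using card_subset_eq fe assms by (metis Int_lower1 Int_lower2)+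
    thus False using assms(3) by simp
  qed
  moreover have "card (e1 \<inter> e2) \<le> 2" using assms fe by (metis Int_lower1 card_mono)
  ultimately show ?thesis using card_Un_Int[OF fe] assms by simp
qed

lemma finite_Kedges: "finite (Kedges n)"
  unfolding Kedges_def by (rule finite_subset[of _ "Pow {..<n}"]) auto

lemma card_Kedges: "n - 1 \<le> card (Kedges n)"
proof -
  have "(\<lambda>i. {0, Suc i}) ` {..<n-1} \<subseteq> Kedges n" unfolding Kedges_def by auto
  moreover have "inj_on (\<lambda>i. {0, Suc i}) {..<n-1}" by (auto simp: inj_on_def doubleton_eq_iff)
  ultimately show ?thesis using card_mono[OF finite_Kedges] card_image by (metis card_lessThan)
qed

lemma codeg_asym:
  assumes sg: "simple_graph V E" and sb: "strictly_2_balanced V E"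
    and l: "2 \<le> l" "l \<le> card E - 1"
  shows "\<exists>C \<beta>. real \<beta> < real (card V - 2) * (real (card E - l) / real (card E - 1)) \<and>
     (\<forall>n \<ge> l+1. real (max_codegree (Kedges n) (copies V E n) l) \<le> C * real n ^ \<beta>)"
proof -
  define h where "h = card V"
  define k where "k = card E"
  have fV: "finite V" using sg simple_graph_def by blast
  have fE: "finite E" using finite_E[OF sg] .
  have k3: "k \<ge> 3" and h3: "h \<ge> 3" using sb unfolding strictly_2_balanced_def h_def k_def by auto
  have eV: "\<And>e. e \<in> E \<Longrightarrow> e \<subseteq> V \<and> card e = 2" using sg unfolding simple_graph_def by auto
  define \<T> where "\<T> = {T. T \<subseteq> E \<and> card T = l}"
  have fT: "finite \<T>" unfolding \<T>_def using fE by (auto intro: finite_subset[of _ "Pow E"])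
  have "l \<le> card E" using l k3 unfolding k_def by simp
  then obtain T0 where "T0 \<subseteq> E" "card T0 = l" by (rule obtain_subset_with_card_n)
  hence neT: "\<T> \<noteq> {}" unfolding \<T>_def by blast
  define \<gamma> where "\<gamma> = real (h - 2) * (real (k - l) / real (k - 1))"
  have wT: "real (h - card (\<Union>T)) < \<gamma>" if T: "T \<in> \<T>" for T
  proof -
    have TE: "T \<subseteq> E" and cT: "card T = l" using T unfolding \<T>_def by auto
    have fTT: "finite T" using TE fE finite_subset by blast
    have UV: "\<Union>T \<subseteq> V" using TE eV by blast
    have fU: "finite (\<Union>T)" using UV fV finite_subset by blast
    have "\<not> card T \<le> Suc 0" using cT l by simp
    hence "\<not> (\<forall>a1\<in>T. \<forall>a2\<in>T. a1 = a2)" using card_le_Suc0_iff_eq[OF fTT] by blast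
    then obtain e1 e2 where e: "e1 \<in> T" "e2 \<in> T" "e1 \<noteq> e2" by blast
    have "3 \<le> card (e1 \<union> e2)" using two_edges e eV TE by blast
    also have "\<dots> \<le> card (\<Union>T)" using e fU by (intro card_mono) auto
    finally have w3: "3 \<le> card (\<Union>T)" .
    have wh: "card (\<Union>T) \<le> h" unfolding h_def using UV fV by (rule card_mono[rotated])
    have sub: "subgraph (\<Union>T) T V E" using UV TE unfolding subgraph_def by auto
    have "T \<noteq> E" using cT l k3 unfolding k_def by auto
    hence "d2 (\<Union>T) T < d2 V E" using proper_lt[OF sg sb sub w3] by blast
    hence ineq: "(real l - 1) / (real (card (\<Union>T)) - 2) < (real k - 1) / (real h - 2)"
      unfolding d2_def h_def k_def cT by simp
    define w where "w = card (\<Union>T)"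
    have w3': "real w \<ge> 3" "real h \<ge> 3" "real k \<ge> 3" using w3 h3 k3 unfolding w_def by auto
    have "(real l - 1) * (real h - 2) < (real k - 1) * (real w - 2)"
      using ineq w3' unfolding w_def[symmetric] by (simp add: field_simps)
    hence "(real h - real w) * (real k - 1) < (real h - 2) * (real k - real l)"
      by (simp add: algebra_simps)
    hence "real h - real w < (real h - 2) * ((real k - real l) / (real k - 1))"
      using w3' by (simp add: field_simps)
    moreover have "l \<le> k" using l k3 unfolding k_def by simp
    ultimately show ?thesis unfolding \<gamma>_def w_def[symmetric] using wh k3 h3 unfolding w_def
      by (simp add: of_nat_diff)
  qed
  define \<beta> where "\<beta> = Max ((\<lambda>T. h - card (\<Union>T)) ` \<T>)"
  have "\<beta> \<in> (\<lambda>T. h - card (\<Union>T)) ` \<T>" unfolding \<beta>_def using fT neT by (intro Max_in) auto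
  then obtain Tm where "Tm \<in> \<T>" "\<beta> = h - card (\<Union>Tm)" by blast
  hence b\<gamma>: "real \<beta> < \<gamma>" using wT by simp
  have bge: "h - card (\<Union>T) \<le> \<beta>" if "T \<in> \<T>" for T unfolding \<beta>_def using fT that by (intro Max_ge) auto
  define C where "C = card \<T> * (2*l) ^ h"
  have bound: "real (max_codegree (Kedges n) (copies V E n) l) \<le> real C * real n ^ \<beta>" if n: "n \<ge> l + 1" for n
  proof -
    define M where "M = {card {e\<in>copies V E n. S \<subseteq> e} | S. S \<subseteq> Kedges n \<and> card S = l}"
    have "M = (\<lambda>S. card {e\<in>copies V E n. S \<subseteq> e}) ` {S. S \<subseteq> Kedges n \<and> card S = l}" unfolding M_def by blast
    hence fM: "finite M" using finite_Kedges by (auto intro: finite_subset[of _ "Pow (Kedges n)"])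
    have "l \<le> card (Kedges n)" using card_Kedges[of n] n by simp
    then obtain S0 where "S0 \<subseteq> Kedges n" "card S0 = l" using obtain_subset_with_card_n by metis
    hence neM: "M \<noteq> {}" unfolding M_def by blast
    have "x \<le> C * n ^ \<beta>" if x: "x \<in> M" for x
    proof -
      obtain S where S: "S \<subseteq> Kedges n" "card S = l" "x = card {e\<in>copies V E n. S \<subseteq> e}" using x unfolding M_def by blast
      have "x \<le> (\<Sum>T\<in>\<T>. (2*l) ^ card (\<Union>T) * n ^ (card V - card (\<Union>T)))"
        unfolding S(3) \<T>_def by (rule codeg_bound[OF sg S(1,2)])
      also have "\<dots> \<le> (\<Sum>T\<in>\<T>. (2*l) ^ h * n ^ \<beta>)"
      proof (rule sum_mono)
        fix T assume T: "T \<in> \<T>"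
        have "card (\<Union>T) \<le> h"
        proof -
          have "\<Union>T \<subseteq> V" using T eV unfolding \<T>_def by blast
          thus ?thesis unfolding h_def using fV by (rule card_mono[rotated])
        qed
        hence "(2*l) ^ card (\<Union>T) \<le> (2*l) ^ h" using l by (intro power_increasing) auto
        moreover have "n ^ (card V - card (\<Union>T)) \<le> n ^ \<beta>"
          using bge[OF T] n unfolding h_def by (intro power_increasing) auto
        ultimately show "(2*l) ^ card (\<Union>T) * n ^ (card V - card (\<Union>T)) \<le> (2*l) ^ h * n ^ \<beta>"
          by (rule mult_le_mono)
      qed
      also have "\<dots> = C * n ^ \<beta>" unfolding C_def by simp
      finally show ?thesis .
    qed
    hence "Max M \<le> C * n ^ \<beta>" using fM neM by (simp add: Max_le_iff)
    hence "real (Max M) \<le> real (C * n ^ \<beta>)" by (rule of_nat_mono)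
    thus ?thesis unfolding max_codegree_def M_def by simp
  qed
  show ?thesis
    apply (rule exI[of _ "real C"], rule exI[of _ \<beta>])
    using b\<gamma> bound unfolding \<gamma>_def h_def k_def by blast
qed

lemma gamma_asym:
  assumes sg: "simple_graph V E" and sb: "strictly_2_balanced V E"
  shows "\<forall>n\<ge>3. real (Gamma (Kedges n) (copies V E n) (card E))
           \<le> real (card {W. W \<subseteq> V \<and> card W = 3} * 4 ^ 3) * real n ^ (card V - 3)"
proof (intro allI impI)
  fix n :: nat assume n: "n \<ge> 3"
  define B where "B = card {W. W \<subseteq> V \<and> card W = 3} * 4 ^ 3 * n ^ (card V - 3)"
  define g where "g = (\<lambda>v v'. card {S. S \<subseteq> Kedges n \<and> card S = card E - 1 \<and> insert v S \<in> copies V E n \<and> insert v' S \<in> copies V E n})"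
  define M where "M = {g v v' | v v'. v \<in> Kedges n \<and> v' \<in> Kedges n \<and> v \<noteq> v'}"
  have GM: "Gamma (Kedges n) (copies V E n) (card E) = Max M" unfolding Gamma_def M_def g_def by simp
  have "M \<subseteq> (\<lambda>p. g (fst p) (snd p)) ` (Kedges n \<times> Kedges n)"
  proof
    fix x assume "x \<in> M"
    then obtain v v' where "x = g v v'" "v \<in> Kedges n" "v' \<in> Kedges n" unfolding M_def by blast
    thus "x \<in> (\<lambda>p. g (fst p) (snd p)) ` (Kedges n \<times> Kedges n)" by force
  qed
  moreover have "finite (Kedges n \<times> Kedges n)" using finite_Kedges by simp
  ultimately have fM: "finite M" by (meson finite_imageI finite_subset)
  have k1: "{0, 1} \<in> Kedges n" unfolding Kedges_def using n by simp
  have k2: "{0, 2} \<in> Kedges n" unfolding Kedges_def using n by simp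
  have k3: "{0::nat, 1} \<noteq> {0, 2}"
  proof
    assume "{0::nat, 1} = {0, 2}"
    hence "(1::nat) \<in> {0, 2}" by blast
    thus False by simp
  qed
  have "\<exists>v v'. g {0,1} {0,2} = g v v' \<and> v \<in> Kedges n \<and> v' \<in> Kedges n \<and> v \<noteq> v'"
    by (rule exI[of _ "{0,1}"], rule exI[of _ "{0,2}"]) (intro conjI refl k1 k2 k3)
  hence "g {0,1} {0,2} \<in> M" unfolding M_def mem_Collect_eq .
  hence neM: "M \<noteq> {}" by blast
  have "x \<le> B" if "x \<in> M" for x
  proof -
    obtain v v' where vv: "x = g v v'" "v \<in> Kedges n" "v' \<in> Kedges n" "v \<noteq> v'" using \<open>x \<in> M\<close> unfolding M_def by blast
    show ?thesis unfolding vv(1) g_def B_def by (rule gamma_bound[OF sg sb vv(2,3,4)])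
  qed
  hence "Max M \<le> B" using fM neM by (simp add: Max_le_iff)
  hence "real (Max M) \<le> real B" by (rule of_nat_mono)
  thus "real (Gamma (Kedges n) (copies V E n) (card E)) \<le> real (card {W. W \<subseteq> V \<and> card W = 3} * 4 ^ 3) * real n ^ (card V - 3)"
    unfolding GM B_def by simp
qed

theorem mainTheorem19:
  fixes V :: "'a set" and E :: "'a set set" and h k :: nat and Delta :: "nat \<Rightarrow> real"
  assumes "simple_graph V E"
    and "strictly_2_balanced V E"
    and "h = card V" and "k = card E"
    and "Delta = (\<lambda>n. 2 * real k * real (falling (n - 2) (h - 2)) / real (card (Aut V E)))"
  shows "(\<forall>n\<ge>h. \<forall>v\<in>Kedges n. real (degree (copies V E n) v) = Delta n)
    \<and> (\<forall>l\<in>{2..k-1}. (\<lambda>n. real (max_codegree (Kedges n) (copies V E n) l))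
          \<in> o(\<lambda>n. Delta n powr (real (k - l) / real (k - 1))))
    \<and> (\<lambda>n. real (Gamma (Kedges n) (copies V E n) k)) \<in> o(\<lambda>n. Delta n)"
proof -
  note sg = assms(1) and sb = assms(2) and hd = assms(3) and kd = assms(4) and Dd = assms(5)
  have fV: "finite V" using sg simple_graph_def by blast
  have k3: "k \<ge> 3" and h3: "h \<ge> 3" using sb unfolding strictly_2_balanced_def hd kd by auto
  have UE: "\<Union>E = V"
  proof
    show "\<Union>E \<subseteq> V" using sg unfolding simple_graph_def by auto
    show "V \<subseteq> \<Union>E"
    proof
      fix u assume u: "u \<in> V"
      have "2 \<le> card {e\<in>E. u \<in> e}" by (rule min_deg[OF sg sb u])
      hence "{e\<in>E. u \<in> e} \<noteq> {}" by (metis card.empty not_numeral_le_zero)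
      thus "u \<in> \<Union>E" by blast
    qed
  qed
  define A where "A = card (Aut V E)"
  have "Aut V E \<subseteq> {p. p permutes V}" unfolding Aut_def by blast
  hence fA: "finite (Aut V E)" using finite_permutations[OF fV] finite_subset by blast
  have "id \<in> Aut V E" unfolding Aut_def by (simp add: permutes_id)
  hence A0: "A > 0" unfolding A_def using fA card_gt_0_iff by blast
  have DD: "Delta n = 2 * real k * real (falling (n - 2) (h - 2)) / real A" for n
    unfolding Dd A_def by simp
  have P1: "\<forall>n\<ge>h. \<forall>v\<in>Kedges n. real (degree (copies V E n) v) = Delta n"
  proof (intro allI impI ballI)
    fix n v assume v: "v \<in> Kedges n"
    have "A * degree (copies V E n) v = k * (2 * falling (n - 2) (h - 2))"
      unfolding A_def hd kd by (rule degree_formula[OF sg UE v])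
    hence "real A * real (degree (copies V E n) v) = real k * (2 * real (falling (n - 2) (h - 2)))"
      by (metis of_nat_mult of_nat_numeral)
    thus "real (degree (copies V E n) v) = Delta n" unfolding DD using A0
      by (simp add: field_simps)
  qed
  define c where "c = 2 * real k / real A * (1/2) ^ (h - 2)"
  have c0: "c > 0" unfolding c_def using A0 k3 by simp
  have low: "\<forall>n\<ge>2*h. c * real n ^ (h - 2) \<le> Delta n"
    unfolding DD c_def using Delta_lower[of h A k] h3 A0 by simp
  have P2: "\<forall>l\<in>{2..k-1}. (\<lambda>n. real (max_codegree (Kedges n) (copies V E n) l))
          \<in> o(\<lambda>n. Delta n powr (real (k - l) / real (k - 1)))"
  proof
    fix l assume l: "l \<in> {2..k-1}"
    have l2: "2 \<le> l" "l \<le> card E - 1" using l kd by auto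
    have "\<exists>C \<beta>. real \<beta> < real (h - 2) * (real (k - l) / real (k - 1)) \<and>
     (\<forall>n \<ge> l+1. real (max_codegree (Kedges n) (copies V E n) l) \<le> C * real n ^ \<beta>)"
      unfolding hd kd by (rule codeg_asym[OF sg sb l2])
    then obtain C \<beta> where b: "real \<beta> < real (h - 2) * (real (k - l) / real (k - 1))"
      and bd: "\<forall>n \<ge> l+1. real (max_codegree (Kedges n) (copies V E n) l) \<le> C * real n ^ \<beta>"
      by blast
    show "(\<lambda>n. real (max_codegree (Kedges n) (copies V E n) l)) \<in> o(\<lambda>n. Delta n powr (real (k - l) / real (k - 1)))"
    proof (rule asym_main[where N = "max (2*h) (l+1)" and C = C and b = \<beta> and c = c and a = "h - 2"])
      show "\<forall>n\<ge>max (2*h) (l+1). 0 \<le> real (max_codegree (Kedges n) (copies V E n) l) \<and>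
              real (max_codegree (Kedges n) (copies V E n) l) \<le> C * real n ^ \<beta>" using bd by simp
      show "\<forall>n\<ge>max (2*h) (l+1). c * real n ^ (h - 2) \<le> Delta n" using low by simp
      show "c > 0" by (rule c0)
      show "real (k - l) / real (k - 1) > 0" using l k3 by auto
      show "real \<beta> < real (h - 2) * (real (k - l) / real (k - 1))" by (rule b)
    qed
  qed
  have P3: "(\<lambda>n. real (Gamma (Kedges n) (copies V E n) k)) \<in> o(\<lambda>n. Delta n)"
  proof -
    have g: "\<forall>n\<ge>3. real (Gamma (Kedges n) (copies V E n) k)
           \<le> real (card {W. W \<subseteq> V \<and> card W = 3} * 4 ^ 3) * real n ^ (h - 3)"
      using gamma_asym[OF sg sb] unfolding hd kd .
    have "(\<lambda>n. real (Gamma (Kedges n) (copies V E n) k)) \<in> o(\<lambda>n. Delta n powr 1)"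
    proof (rule asym_main[where N = "max (2*h) 3" and C = "real (card {W. W \<subseteq> V \<and> card W = 3} * 4 ^ 3)"
          and b = "h - 3" and c = c and a = "h - 2"])
      show "\<forall>n\<ge>max (2*h) 3. 0 \<le> real (Gamma (Kedges n) (copies V E n) k) \<and>
              real (Gamma (Kedges n) (copies V E n) k) \<le> real (card {W. W \<subseteq> V \<and> card W = 3} * 4 ^ 3) * real n ^ (h - 3)"
        using g by simp
      show "\<forall>n\<ge>max (2*h) 3. c * real n ^ (h - 2) \<le> Delta n" using low by simp
      show "c > 0" by (rule c0)
      show "(1::real) > 0" by simp
      show "real (h - 3) < real (h - 2) * 1" using h3 by simp
    qed
    moreover have "(\<lambda>n. Delta n powr 1) = Delta"
    proof
      fix n show "Delta n powr 1 = Delta n" unfolding DD using A0 by (intro powr_one) simp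
    qed
    ultimately show ?thesis by simp
  qed
  show ?thesis using P1 P2 P3 by blast
qed

end
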